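(* Let $G:\mathbb{R}_+\to\mathbb{R}_+$ with $G(0)>0$ be a convolution kernel that preserves nonnegativity in the following sense: for any $K\in\mathbb{N}^*$, $x_1,\dots,x_K\in\mathbb{R}$ and $0\le t_1<\dots<t_K$ such that $\sum_{k'=1}^kx_{k'}G(t_k-t_{k'})\ge0$ for all $k\in\{1,\dots,K\}$, one has $\sum_{k:t_k\le t}x_kG(t-t_k)\ge0$ for all $t\ge0$. Let $\rho$ be a Borel measure on $\mathbb{R}_+$ finite on compact sets. Then the double kernels $\Gamma^r(t,s)=G(\rho((s,t]))$ and $\Gamma^\ell(t,s)=G(\rho([s,t)))$, $0\le s\le t$, preserve nonnegativity.
   Context: A double kernel $\Gamma:\{(t,s):0\le s\le t\}\to\mathbb{R}_+$ preserves nonnegativity if for every $T>0$, any $K\in\mathbb{N}^*$, $x_1,\dots,x_K\in\mathbb{R}$ and $0\le t_1<\dots<t_K<T$ with $\sum_{k'=1}^kx_{k'}\Gamma(t_k,t_{k'})\ge0$ for all $k$, one has $\sum_{k:t_k\le t}x_k\Gamma(t,t_k)\ge0$ for all $t\in[0,T]$. *)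

theory Defs
  imports "HOL-Analysis.Analysis"
begin

text \<open>Points t_1 < ... < t_K are indexed 0..K-1 (functions nat => real on {..<K}).\<close>

definition preserves_nonneg_conv :: "(real \<Rightarrow> real) \<Rightarrow> bool" where
  "preserves_nonneg_conv G \<longleftrightarrow>
     (\<forall>(K::nat) (x::nat \<Rightarrow> real) (tt::nat \<Rightarrow> real).
        K \<ge> 1 \<longrightarrow> 0 \<le> tt 0 \<longrightarrow> (\<forall>i j. i < j \<longrightarrow> j < K \<longrightarrow> tt i < tt j) \<longrightarrow>
        (\<forall>k<K. (\<Sum>k'\<le>k. x k' * G (tt k - tt k')) \<ge> 0) \<longrightarrow>
        (\<forall>t\<ge>0. (\<Sum>k\<in>{k. k < K \<and> tt k \<le> t}. x k * G (t - tt k)) \<ge> 0))"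

definition preserves_nonneg_double :: "(real \<Rightarrow> real \<Rightarrow> real) \<Rightarrow> bool" where
  "preserves_nonneg_double \<Gamma> \<longleftrightarrow>
     (\<forall>(T::real) (K::nat) (x::nat \<Rightarrow> real) (tt::nat \<Rightarrow> real).
        T > 0 \<longrightarrow> K \<ge> 1 \<longrightarrow> 0 \<le> tt 0 \<longrightarrow> (\<forall>i j. i < j \<longrightarrow> j < K \<longrightarrow> tt i < tt j) \<longrightarrow>
        tt (K - 1) < T \<longrightarrow>
        (\<forall>k<K. (\<Sum>k'\<le>k. x k' * \<Gamma> (tt k) (tt k')) \<ge> 0) \<longrightarrow>
        (\<forall>t\<in>{0..T}. (\<Sum>k\<in>{k. k < K \<and> tt k \<le> t}. x k * \<Gamma> t (tt k)) \<ge> 0))"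

end

theory Submission imports Defs begin

lemma merge_lemma:
  fixes G :: "real \<Rightarrow> real" and u x :: "nat \<Rightarrow> real"
  assumes G_pres: "preserves_nonneg_conv G"
    and mono: "\<forall>i j. i \<le> j \<longrightarrow> j < K \<longrightarrow> u i \<le> u j"
    and pos: "\<forall>k<K. 0 \<le> u k"
    and hyp: "\<forall>k<K. 0 \<le> (\<Sum>k'\<le>k. x k' * G (u k - u k'))"
    and vge: "\<forall>k<K. u k \<le> v" and v0: "0 \<le> v"
  shows "0 \<le> (\<Sum>k<K. x k * G (v - u k))"
proof (cases "K = 0")
  case True then show ?thesis by simp
next
  case False
  define U where "U = u ` {..<K}"
  define ws where "ws = sorted_list_of_set U"
  define M where "M = length ws"
  define w where "w j = ws ! j" for j
  define y where "y j = (\<Sum>k\<in>{k. k < K \<and> u k = w j}. x k)" for j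
  have fU: "finite U" unfolding U_def by simp
  have setws: "set ws = U" unfolding ws_def using fU by simp
  have sw: "sorted_wrt (<) ws" unfolding ws_def by (rule strict_sorted_list_of_set)
  have dws: "distinct ws" unfolding ws_def by simp
  have wlt: "w i < w j" if "i < j" "j < M" for i j
    using sorted_wrt_nth_less[OF sw that[unfolded M_def]] unfolding w_def .
  have wle: "w i \<le> w j \<longleftrightarrow> i \<le> j" if "i < M" "j < M" for i j
    using wlt that by (metis linorder_not_le order_less_imp_le order_less_irrefl antisym_conv1)
  have wU: "w j \<in> U" if "j < M" for j
    using that setws unfolding w_def M_def by auto
  have Uw: "\<exists>j<M. w j = z" if "z \<in> U" for z
    using that setws unfolding w_def M_def by (metis in_set_conv_nth)
  have injw: "inj_on w {..<M}"
    using dws unfolding w_def M_def inj_on_def by (simp add: nth_eq_iff_index_eq)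
  have MK: "M \<ge> 1"
  proof -
    have "u 0 \<in> U" using False unfolding U_def by auto
    then show ?thesis using Uw by fastforce
  qed
  have key: "(\<Sum>j\<in>J. y j * h (w j)) = (\<Sum>k\<in>{k. k < K \<and> u k \<in> w ` J}. x k * h (u k))"
    if J: "J \<subseteq> {..<M}" for J and h :: "real \<Rightarrow> real"
  proof -
    have "(\<Sum>j\<in>J. y j * h (w j)) = (\<Sum>j\<in>J. \<Sum>k\<in>{k. k < K \<and> u k = w j}. x k * h (w j))"
      unfolding y_def sum_distrib_right by simp
    also have "\<dots> = (\<Sum>z\<in>w ` J. \<Sum>k\<in>{k. k < K \<and> u k = z}. x k * h z)"
      using sum.reindex[OF inj_on_subset[OF injw J], of "\<lambda>z. \<Sum>k\<in>{k. k < K \<and> u k = z}. x k * h z"] by simp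
    also have "\<dots> = (\<Sum>z\<in>w ` J. \<Sum>k\<in>{k. k \<in> {k. k < K \<and> u k \<in> w ` J} \<and> u k = z}. x k * h (u k))"
      by (intro sum.cong refl arg_cong[where f="\<lambda>S. sum _ S"]) auto
    also have "\<dots> = (\<Sum>k\<in>{k. k < K \<and> u k \<in> w ` J}. x k * h (u k))"
      using finite_subset[OF J] by (intro sum.group) auto
    finally show ?thesis .
  qed
  have conv: "\<forall>t\<ge>0. (\<Sum>j\<in>{j. j < M \<and> w j \<le> t}. y j * G (t - w j)) \<ge> 0"
  proof -
    have A: "w 0 \<ge> 0" using wU[of 0] MK pos unfolding U_def by auto
    have B: "\<forall>i j. i < j \<longrightarrow> j < M \<longrightarrow> w i < w j" using wlt by blast
    have C: "\<forall>j<M. (\<Sum>j'\<le>j. y j' * G (w j - w j')) \<ge> 0"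
    proof (intro allI impI)
      fix j assume j: "j < M"
      have s1: "(\<Sum>j'\<le>j. y j' * G (w j - w j')) = (\<Sum>k\<in>{k. k < K \<and> u k \<in> w ` {..j}}. x k * G (w j - u k))"
        using key[of "{..j}" "\<lambda>z. G (w j - z)"] j by fastforce
      define k0 where "k0 = Max {k. k < K \<and> u k = w j}"
      have ne: "{k. k < K \<and> u k = w j} \<noteq> {}" using wU[OF j] unfolding U_def by auto
      have fin: "finite {k. k < K \<and> u k = w j}" by simp
      have k0in: "k0 < K \<and> u k0 = w j" using Max_in[OF fin ne] unfolding k0_def by simp
      have k0max: "k \<le> k0" if "k < K" "u k = w j" for k
        unfolding k0_def using that fin by (simp add: Max_ge)
      have seteq: "{k. k < K \<and> u k \<in> w ` {..j}} = {..k0}"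
      proof (intro set_eqI iffI)
        fix k assume "k \<in> {k. k < K \<and> u k \<in> w ` {..j}}"
        then obtain i where i: "i \<le> j" "k < K" "u k = w i" by auto
        show "k \<in> {..k0}"
        proof (rule ccontr)
          assume "k \<notin> {..k0}"
          then have "k0 < k" by simp
          then have "u k0 \<le> u k" using mono i(2) by (metis less_imp_le)
          moreover have "w i \<le> w j" using wle i j by simp
          ultimately have "u k = w j" using k0in i by simp
          then show False using k0max[of k] i \<open>k0 < k\<close> by simp
        qed
      next
        fix k assume "k \<in> {..k0}"
        then have k: "k \<le> k0" by simp
        then have kK: "k < K" using k0in by simp
        then have "u k \<in> U" unfolding U_def by simp
        then obtain i where i: "i < M" "w i = u k" using Uw by blast
        have "u k \<le> w j" using mono k k0in by metis
        then have "i \<le> j" using wle[OF i(1) j] i(2) by simp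
        then show "k \<in> {k. k < K \<and> u k \<in> w ` {..j}}" using kK i by force
      qed
      show "(\<Sum>j'\<le>j. y j' * G (w j - w j')) \<ge> 0"
        using s1 seteq hyp[rule_format, of k0] k0in by simp
    qed
    show ?thesis using G_pres[unfolded preserves_nonneg_conv_def, rule_format, of M w y] MK A B C by blast
  qed
  have "{j. j < M \<and> w j \<le> v} = {..<M}"
    using wU vge unfolding U_def by fastforce
  then have "(\<Sum>j<M. y j * G (v - w j)) \<ge> 0" using conv v0 by metis
  moreover have "(\<Sum>j<M. y j * G (v - w j)) = (\<Sum>k<K. x k * G (v - u k))"
  proof -
    have "w ` {..<M} = U" using wU Uw by force
    then have "{k. k < K \<and> u k \<in> w ` {..<M}} = {..<K}" unfolding U_def by auto
    then show ?thesis using key[of "{..<M}" "\<lambda>z. G (v - z)"] by simp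
  qed
  ultimately show ?thesis by simp
qed

lemma double_from_F:
  fixes G F :: "real \<Rightarrow> real" and \<Gamma> :: "real \<Rightarrow> real \<Rightarrow> real"
  assumes G_pres: "preserves_nonneg_conv G"
    and Fmono: "\<forall>a b. 0 \<le> a \<longrightarrow> a \<le> b \<longrightarrow> F a \<le> F b"
    and Fpos: "\<forall>a\<ge>0. 0 \<le> F a"
    and Geq: "\<forall>s t. 0 \<le> s \<longrightarrow> s \<le> t \<longrightarrow> \<Gamma> t s = G (F t - F s)"
  shows "preserves_nonneg_double \<Gamma>"
  unfolding preserves_nonneg_double_def
proof (intro allI impI ballI)
  fix T :: real and K :: nat and x tt :: "nat \<Rightarrow> real" and t :: real
  assume T: "T > 0" and K: "K \<ge> 1" and t0: "0 \<le> tt 0"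
    and inc: "\<forall>i j. i < j \<longrightarrow> j < K \<longrightarrow> tt i < tt j" and last: "tt (K - 1) < T"
    and hyp: "\<forall>k<K. (\<Sum>k'\<le>k. x k' * \<Gamma> (tt k) (tt k')) \<ge> 0"
    and t: "t \<in> {0..T}"
  have ttmono: "tt i \<le> tt j" if "i \<le> j" "j < K" for i j
    using inc that by (cases "i = j") (auto simp: less_imp_le)
  have ttpos: "0 \<le> tt k" if "k < K" for k
    using ttmono[of 0 k] that t0 by simp
  define S where "S = {k. k < K \<and> tt k \<le> t}"
  show "(\<Sum>k\<in>{k. k < K \<and> tt k \<le> t}. x k * \<Gamma> t (tt k)) \<ge> 0"
  proof (cases "S = {}")
    case True then show ?thesis unfolding S_def by (metis order_refl sum.empty)
  next
    case False
    have finS: "finite S" unfolding S_def by simp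
    define n where "n = Max S"
    have nS: "n \<in> S" unfolding n_def using Max_in[OF finS False] .
    have Seq: "S = {..<Suc n}"
    proof (intro set_eqI iffI)
      fix k assume "k \<in> S" then show "k \<in> {..<Suc n}"
        unfolding n_def using finS by (simp add: Max_ge less_Suc_eq_le)
    next
      fix k assume "k \<in> {..<Suc n}"
      then have "k \<le> n" by simp
      then show "k \<in> S" using nS ttmono[of k n] unfolding S_def by auto
    qed
    have m: "\<forall>k<Suc n. k < K \<and> tt k \<le> t" using Seq unfolding S_def by blast
    have "(\<Sum>k<Suc n. x k * G (F t - F (tt k))) \<ge> 0"
    proof (rule merge_lemma[OF G_pres])
      show "\<forall>i j. i \<le> j \<longrightarrow> j < Suc n \<longrightarrow> F (tt i) \<le> F (tt j)"
        using m ttmono ttpos Fmono by (meson le_less_trans)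
      show "\<forall>k<Suc n. 0 \<le> F (tt k)" using m ttpos Fpos by blast
      show "\<forall>k<Suc n. 0 \<le> (\<Sum>k'\<le>k. x k' * G (F (tt k) - F (tt k')))"
      proof (intro allI impI)
        fix k assume k: "k < Suc n"
        have "(\<Sum>k'\<le>k. x k' * \<Gamma> (tt k) (tt k')) = (\<Sum>k'\<le>k. x k' * G (F (tt k) - F (tt k')))"
        proof (intro sum.cong refl)
          fix k' assume "k' \<in> {..k}"
          then have "k' \<le> k" "k < K" using m k by auto
          then have "0 \<le> tt k'" "tt k' \<le> tt k" using ttpos ttmono by auto
          then show "x k' * \<Gamma> (tt k) (tt k') = x k' * G (F (tt k) - F (tt k'))" using Geq by simp
        qed
        then show "0 \<le> (\<Sum>k'\<le>k. x k' * G (F (tt k) - F (tt k')))" using hyp m k by metis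
      qed
      show "\<forall>k<Suc n. F (tt k) \<le> F t" using m ttpos Fmono by blast
      show "0 \<le> F t" using Fpos t by simp
    qed
    moreover have "(\<Sum>k<Suc n. x k * G (F t - F (tt k))) = (\<Sum>k\<in>S. x k * \<Gamma> t (tt k))"
      unfolding Seq using Geq m ttpos by (intro sum.cong refl) simp
    ultimately show ?thesis unfolding S_def by simp
  qed
qed

lemma meas_diff_aux:
  fixes \<rho> :: "real measure"
  assumes rho_sets: "sets \<rho> = sets (restrict_space borel {0::real..})"
    and A: "A \<in> sets borel" "A \<subseteq> {0..}" and B: "B \<in> sets borel" "B \<subseteq> A"
    and fin: "emeasure \<rho> A \<noteq> \<infinity>"
  shows "measure \<rho> (A - B) = measure \<rho> A - measure \<rho> B"
proof -
  have m: "C \<in> sets \<rho>" if "C \<in> sets borel" "C \<subseteq> {0..}" for C :: "real set"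
    using that unfolding rho_sets by (subst sets_restrict_space_iff) auto
  show ?thesis using A B by (intro measure_Diff fin m) auto
qed

theorem mainTheorem8:
  fixes G :: "real \<Rightarrow> real" and \<rho> :: "real measure"
  assumes G_nonneg: "\<forall>u\<ge>0. G u \<ge> 0"
    and G0: "G 0 > 0"
    and G_pres: "preserves_nonneg_conv G"
    and rho_sets: "sets \<rho> = sets (restrict_space borel {0::real..})"
    and rho_fin: "\<forall>C. compact C \<and> C \<subseteq> {0..} \<longrightarrow> emeasure \<rho> C < \<infinity>"
  shows "preserves_nonneg_double (\<lambda>t s. G (measure \<rho> {s<..t})) \<and>
         preserves_nonneg_double (\<lambda>t s. G (measure \<rho> {s..<t}))"
proof
  have fin1: "emeasure \<rho> {0..t} \<noteq> \<infinity>" for t :: real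
    using rho_fin[rule_format, of "{0..t}"] by auto
  have fin2: "emeasure \<rho> {0..<t} \<noteq> \<infinity>" for t :: real
  proof -
    have "emeasure \<rho> {0..<t} \<le> emeasure \<rho> {0..t}"
      by (rule emeasure_mono) (auto simp: rho_sets sets_restrict_space_iff)
    then show ?thesis using fin1[of t] by (auto simp: top_unique)
  qed
  have d1: "measure \<rho> {s<..t} = measure \<rho> {0..t} - measure \<rho> {0..s}" if "0 \<le> s" "s \<le> t" for s t :: real
  proof -
    have "{0..t} - {0..s} = {s<..t}" using that by auto
    then show ?thesis using meas_diff_aux[OF rho_sets, of "{0..t}" "{0..s}"] fin1 that by auto
  qed
  have d2: "measure \<rho> {s..<t} = measure \<rho> {0..<t} - measure \<rho> {0..<s}" if "0 \<le> s" "s \<le> t" for s t :: real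
  proof -
    have "{0..<t} - {0..<s} = {s..<t}" using that by auto
    moreover have "{0..<s} \<subseteq> {0..<t}" "{0..<t} \<subseteq> {0::real..}" using that by auto
    ultimately show ?thesis using meas_diff_aux[OF rho_sets, of "{0..<t}" "{0..<s}"] fin2[of t] by simp
  qed
  show "preserves_nonneg_double (\<lambda>t s. G (measure \<rho> {s<..t}))"
  proof (rule double_from_F[OF G_pres, where F = "\<lambda>t. measure \<rho> {0..t}"])
    show "\<forall>a b. 0 \<le> a \<longrightarrow> a \<le> b \<longrightarrow> measure \<rho> {0..a} \<le> measure \<rho> {0..b}"
    proof (intro allI impI)
      fix a b :: real assume "0 \<le> a" "a \<le> b"
      then have "measure \<rho> {0..b} - measure \<rho> {0..a} \<ge> 0" using d1[of a b] measure_nonneg[of \<rho> "{a<..b}"] by linarith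
      then show "measure \<rho> {0..a} \<le> measure \<rho> {0..b}" by simp
    qed
    show "\<forall>a\<ge>0. 0 \<le> measure \<rho> {0..a}" by simp
    show "\<forall>s t. 0 \<le> s \<longrightarrow> s \<le> t \<longrightarrow> G (measure \<rho> {s<..t}) = G (measure \<rho> {0..t} - measure \<rho> {0..s})"
      using d1 by presburger
  qed
  show "preserves_nonneg_double (\<lambda>t s. G (measure \<rho> {s..<t}))"
  proof (rule double_from_F[OF G_pres, where F = "\<lambda>t. measure \<rho> {0..<t}"])
    show "\<forall>a b. 0 \<le> a \<longrightarrow> a \<le> b \<longrightarrow> measure \<rho> {0..<a} \<le> measure \<rho> {0..<b}"
    proof (intro allI impI)
      fix a b :: real assume "0 \<le> a" "a \<le> b"
      then have "measure \<rho> {0..<b} - measure \<rho> {0..<a} \<ge> 0" using d2[of a b] measure_nonneg[of \<rho> "{a..<b}"] by linarith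
      then show "measure \<rho> {0..<a} \<le> measure \<rho> {0..<b}" by simp
    qed
    show "\<forall>a\<ge>0. 0 \<le> measure \<rho> {0..<a}" by simp
    show "\<forall>s t. 0 \<le> s \<longrightarrow> s \<le> t \<longrightarrow> G (measure \<rho> {s..<t}) = G (measure \<rho> {0..<t} - measure \<rho> {0..<s})"
      using d2 by presburger
  qed
qed

end
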